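(* Let $T\in(0,\infty)$, $n\in\mathbb N$, $s\in[0,T)$, $t\in[0,s]$, and let $\psi\colon[0,T]\to[0,\infty]$ be non-increasing. Then $$\sum_{r\in[s,T]}q^{n,[s,T]}(r)\,\psi(r)\le\sum_{r\in[t,T]}q^{n,[t,T]}(r)\,\psi(r).$$
   Context: For $n\in\mathbb N$ let $c^n_1,\dots,c^n_n\in[-1,1]$ be the $n$ distinct roots of the Legendre polynomial $x\mapsto\frac{1}{2^nn!}\frac{d^n}{dx^n}[(x^2-1)^n]$. For $a\in\mathbb R$, $b\in[a,\infty)$ let $q^{n,[a,b]}\colon[a,b]\to\mathbb R$ be $q^{n,[a,b]}(t)=\int_a^b\prod_{i\in\{1,\dots,n\},\,c^n_i\neq\frac{2t-(a+b)}{b-a}}\frac{2x-(b-a)c^n_i-(a+b)}{2t-(b-a)c^n_i-(a+b)}\,dx$ if $a<b$ and $\frac{2t-(a+b)}{b-a}\in\{c^n_1,\dots,c^n_n\}$, and $q^{n,[a,b]}(t)=0$ otherwise (Gauss–Legendre weights with $n$ nodes on $[a,b]$). Sums $\sum_{r\in[a,b]}$ range over the finitely many $r$ with nonzero weight; convention $0\cdot\infty=0$. *)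

theory Defs
  imports "HOL-Analysis.Analysis" "HOL-Computational_Algebra.Polynomial"
begin

definition legendre :: "nat \<Rightarrow> real poly" where
  "legendre n = smult (1 / (2 ^ n * fact n)) ((pderiv ^^ n) ([:-1, 0, 1:] ^ n))"

definition legendre_roots :: "nat \<Rightarrow> real set" where
  "legendre_roots n = {x. poly (legendre n) x = 0}"

definition gl_weight :: "nat \<Rightarrow> real \<Rightarrow> real \<Rightarrow> real \<Rightarrow> real" where
  "gl_weight n a b t =
     (if a < b \<and> (2 * t - (a + b)) / (b - a) \<in> legendre_roots n then
        integral {a..b} (\<lambda>x. \<Prod>c \<in> legendre_roots n - {(2 * t - (a + b)) / (b - a)}.
            (2 * x - (b - a) * c - (a + b)) / (2 * t - (b - a) * c - (a + b)))
      else 0)"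

text \<open>Quadrature sum over the finitely many r in [a,b] with nonzero weight;
  values in [0,\<infinity>] are represented in ereal, where 0 * \<infinity> = 0.\<close>
definition gl_sum :: "nat \<Rightarrow> real \<Rightarrow> real \<Rightarrow> (real \<Rightarrow> ereal) \<Rightarrow> ereal" where
  "gl_sum n a b \<psi> = (\<Sum>r \<in> {r \<in> {a..b}. gl_weight n a b r \<noteq> 0}. ereal (gl_weight n a b r) * \<psi> r)"

end

theory Submission imports Defs begin

lemma poly_cont: "continuous_on S (poly (p::real poly))"
  by (auto intro!: continuous_intros)

lemma poly_integrable: "poly (p::real poly) integrable_on {a..b}"
  by (intro integrable_continuous_interval poly_cont)

lemma poly_rolle:
  fixes p :: "real poly"
  assumes "a < b" "poly p a = 0" "poly p b = 0"
  shows "\<exists>z. a < z \<and> z < b \<and> poly (pderiv p) z = 0"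
proof -
  obtain z where z: "a < z" "z < b" "DERIV (poly p) z :> 0"
    using Rolle[of a b "poly p"] assms poly_cont
    by (metis poly_DERIV real_differentiable_def)
  then show ?thesis using DERIV_unique[OF z(3) poly_DERIV] by (intro exI[of _ z]) auto
qed

lemma rolle_count:
  fixes p :: "real poly"
  shows "finite Z \<Longrightarrow> card Z = Suc m \<Longrightarrow> (\<forall>z\<in>Z. poly p z = 0) \<Longrightarrow>
    \<exists>Z'. finite Z' \<and> Z' \<subseteq> {Min Z<..<Max Z} \<and> card Z' = m \<and> (\<forall>z\<in>Z'. poly (pderiv p) z = 0)"
proof (induction m arbitrary: Z)
  case 0
  then show ?case by (intro exI[of _ "{}"]) auto
next
  case (Suc m)
  define M where "M = Max Z"
  define Z0 where "Z0 = Z - {M}"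
  have ne: "Z \<noteq> {}" using Suc.prems by auto
  have MZ: "M \<in> Z" using ne Suc.prems(1) M_def by auto
  have cZ0: "card Z0 = Suc m" using Suc.prems MZ Z0_def by auto
  have fZ0: "finite Z0" using Suc.prems Z0_def by auto
  have ne0: "Z0 \<noteq> {}" using cZ0 by auto
  obtain Z' where Z': "finite Z'" "Z' \<subseteq> {Min Z0<..<Max Z0}" "card Z' = m"
      "\<forall>z\<in>Z'. poly (pderiv p) z = 0"
    using Suc.IH[OF fZ0 cZ0] Suc.prems(3) Z0_def by auto
  have mz0: "Max Z0 \<in> Z0" using fZ0 ne0 by auto
  have lt: "Max Z0 < M"
    using mz0 Z0_def M_def Suc.prems(1) by (metis DiffE Max_ge insertI1 order_le_imp_less_or_eq)
  obtain z where z: "Max Z0 < z" "z < M" "poly (pderiv p) z = 0"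
    using poly_rolle[OF lt] mz0 MZ Suc.prems(3) Z0_def by auto
  have minle: "Min Z \<le> Min Z0"
    using fZ0 ne0 Suc.prems(1) Z0_def by (simp add: Min_antimono)
  have "Min Z0 \<le> Max Z0" using fZ0 ne0 by simp
  show ?case
  proof (intro exI[of _ "insert z Z'"] conjI)
    show "finite (insert z Z')" using Z' by auto
    show "insert z Z' \<subseteq> {Min Z<..<Max Z}"
      using Z'(2) z minle M_def \<open>Min Z0 \<le> Max Z0\<close> by auto
    have "z \<notin> Z'" using Z'(2) z by auto
    then show "card (insert z Z') = Suc m" using Z' by auto
    show "\<forall>z\<in>insert z Z'. poly (pderiv p) z = 0" using Z' z by auto
  qed
qed


lemma dvd_pderiv_lin:
  fixes p :: "real poly"
  assumes "[:-a,1:]^(Suc m) dvd p" shows "[:-a,1:]^m dvd pderiv p"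
proof -
  obtain q where q: "p = [:-a,1:]^(Suc m) * q" using assms by (auto elim: dvdE)
  have "pderiv p = [:-a,1:]^(Suc m) * pderiv q + q * (smult (of_nat (Suc m)) ([:-a,1:]^m) * pderiv [:-a,1:])"
    unfolding q pderiv_mult pderiv_power_Suc ..
  also have "\<dots> = [:-a,1:]^m * ([:-a,1:] * pderiv q + q * smult (of_nat (Suc m)) (pderiv [:-a,1:]))"
    by (simp add: algebra_simps)
  finally show ?thesis by simp
qed

definition fk :: "nat \<Rightarrow> nat \<Rightarrow> real poly" where
  "fk n k = (pderiv ^^ k) ([:-1, 0, 1:] ^ n)"

lemma p0_eq: "([:-1, 0, 1:] ^ n :: real poly) = [:-1,1:]^n * [:-(-1),1:]^n"
  by (simp add: power_mult_distrib[symmetric])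

lemma fk_dvd: "k \<le> n \<Longrightarrow> [:-a,1:]^(n-k) dvd fk n k" if "a = 1 \<or> a = -1"
proof (induction k)
  case 0
  then show ?case using that p0_eq[of n] by (auto simp: fk_def)
next
  case (Suc k)
  then have "[:-a,1:]^(Suc (n - Suc k)) dvd fk n k" by (simp add: Suc_diff_Suc)
  then show ?case by (simp add: fk_def dvd_pderiv_lin)
qed

lemma fk_vanish: "k < n \<Longrightarrow> poly (fk n k) 1 = 0 \<and> poly (fk n k) (-1) = 0"
proof -
  assume "k < n"
  have d: "[:-a,1:] dvd fk n k" if "a = 1 \<or> a = -1" for a :: real
    using fk_dvd[OF that, of k n] \<open>k < n\<close>
    by (meson dvd_power dvd_trans less_imp_le zero_less_diff)
  show ?thesis using d[of 1] d[of "-1"] by (simp add: poly_eq_0_iff_dvd)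
qed

lemma fk_degree: "k \<le> 2*n \<Longrightarrow> degree (fk n k) = 2*n - k \<and> fk n k \<noteq> 0"
proof (induction k)
  case 0
  have "([:-1, 0, 1:] :: real poly) \<noteq> 0" by simp
  then show ?case by (simp add: fk_def degree_power_eq)
next
  case (Suc k)
  then have "degree (fk n k) = 2*n - k" "2*n - k \<noteq> 0" by auto
  then show ?case by (simp add: fk_def degree_pderiv pderiv_eq_0_iff)
qed

lemma fk_roots: "k \<le> n \<Longrightarrow> \<exists>S. finite S \<and> S \<subseteq> {-1<..<1} \<and> card S = k \<and> (\<forall>x\<in>S. poly (fk n k) x = 0)"
proof (induction k)
  case 0
  then show ?case by (intro exI[of _ "{}"]) auto
next
  case (Suc k)
  then obtain S where S: "finite S" "S \<subseteq> {-1<..<1}" "card S = k" "\<forall>x\<in>S. poly (fk n k) x = 0"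
    by auto
  define Z where "Z = insert (-1) (insert 1 S)"
  have fZ: "finite Z" using S Z_def by auto
  have "-1 \<notin> S" "1 \<notin> S" using S(2) by auto
  then have cZ: "card Z = Suc (Suc k)" using S Z_def by auto
  have rZ: "\<forall>z\<in>Z. poly (fk n k) z = 0" using S Z_def fk_vanish[of k n] Suc.prems by auto
  have mn: "Min Z = -1" using fZ S Z_def by (intro Min_eqI) auto
  have mx: "Max Z = 1" using fZ S Z_def by (intro Max_eqI) auto
  obtain Z' where Z': "finite Z'" "Z' \<subseteq> {-1<..<1}" "card Z' = Suc k" "\<forall>z\<in>Z'. poly (pderiv (fk n k)) z = 0"
    using rolle_count[OF fZ cZ rZ] mn mx by auto
  then show ?case by (intro exI[of _ Z']) (auto simp: fk_def)
qed


lemma prod_lin_dvd: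
  fixes p :: "real poly"
  shows "finite S \<Longrightarrow> \<forall>x\<in>S. poly p x = 0 \<Longrightarrow> (\<Prod>d\<in>S. [:-d,1:]) dvd p"
proof (induction S rule: finite_induct)
  case empty
  then show ?case by simp
next
  case (insert x S)
  then obtain q where q: "p = (\<Prod>d\<in>S. [:-d,1:]) * q" by (auto elim: dvdE)
  have "poly (\<Prod>d\<in>S. [:-d,1:]) x \<noteq> 0" using insert(1,2) by (auto simp: poly_prod prod_zero_iff)
  moreover have "poly p x = 0" using insert by auto
  ultimately have "poly q x = 0" using q by simp
  then have "[:-x,1:] dvd q" by (simp only: poly_eq_0_iff_dvd)
  then obtain r where r: "q = [:-x,1:] * r" by (rule dvdE)
  have "p = ([:-x,1:] * (\<Prod>d\<in>S. [:-d,1:])) * r" unfolding q r by (simp only: mult_ac)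
  then show ?case unfolding prod.insert[OF insert(1,2)] by (rule dvdI)
qed

lemma prod_lin_both: "finite S \<Longrightarrow> lead_coeff (\<Prod>d\<in>S. [:-d,1:] :: real poly) = 1 \<and> degree (\<Prod>d\<in>S. [:-d,1:] :: real poly) = card S"
proof (induction S rule: finite_induct)
  case empty
  then show ?case by simp
next
  case (insert x F)
  let ?P = "\<Prod>d\<in>F. [:-d,1:] :: real poly"
  have P0: "?P \<noteq> 0" using insert(3) by auto
  have l0: "[:-x,1:] \<noteq> (0::real poly)" by simp
  have e: "(\<Prod>d\<in>insert x F. [:-d,1:]) = [:-x,1:] * ?P" by (rule prod.insert[OF insert(1,2)])
  have lc1: "lead_coeff [:-x,1:] = (1::real)" by simp
  have A: "lead_coeff ([:-x,1:] * ?P) = 1" by (metis lc1 lead_coeff_mult insert(3) mult_1)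
  have B: "degree ([:-x,1:] * ?P) = Suc (card F)" using degree_mult_eq[OF l0 P0] insert(3) by simp
  show ?case
  proof (intro conjI)
    show "lead_coeff (\<Prod>d\<in>insert x F. [:-d,1:] :: real poly) = 1" unfolding e by (rule A)
    show "degree (\<Prod>d\<in>insert x F. [:-d,1:] :: real poly) = card (insert x F)"
      unfolding e card.insert[OF insert(1,2)] by (rule B)
  qed
qed

lemma degree_prod_lin: "finite S \<Longrightarrow> degree (\<Prod>d\<in>S. [:-d,1:] :: real poly) = card S"
  using prod_lin_both by blast

lemma monic_prod_lin: "finite S \<Longrightarrow> lead_coeff (\<Prod>d\<in>S. [:-d,1:] :: real poly) = 1"
  using prod_lin_both by blast

lemma factor_full:
  fixes p :: "real poly"
  assumes "p \<noteq> 0" "finite S" "\<forall>x\<in>S. poly p x = 0" "card S = degree p"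
  shows "p = smult (lead_coeff p) (\<Prod>d\<in>S. [:-d,1:])"
proof -
  let ?P = "\<Prod>d\<in>S. [:-d,1:] :: real poly"
  obtain q where q: "p = ?P * q" using prod_lin_dvd[OF assms(2,3)] by (auto elim: dvdE)
  have P0: "?P \<noteq> 0" using monic_prod_lin[OF assms(2)] by auto
  have q0: "q \<noteq> 0" using q assms(1) by auto
  have "degree p = card S + degree q" using q P0 q0 degree_mult_eq degree_prod_lin[OF assms(2)] by metis
  then have "degree q = 0" using assms(4) by simp
  then obtain c where c: "q = [:c:]" by (metis degree_eq_zeroE)
  then have H1: "p = smult c ?P" using q by simp
  then have H2: "lead_coeff p = c"
    by (metis lead_coeff_smult monic_prod_lin[OF assms(2)] mult.right_neutral)
  show ?thesis by (subst H2) (rule H1)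
qed

definition Rn :: "nat \<Rightarrow> real set" where "Rn n = legendre_roots n"

lemma legendre_fk: "legendre n = smult (1 / (2 ^ n * fact n)) (fk n n)"
  by (simp add: legendre_def fk_def)

lemma roots_props:
  "finite (legendre_roots n) \<and> card (legendre_roots n) = n \<and> legendre_roots n \<subseteq> {-1<..<1}
   \<and> fk n n = smult (lead_coeff (fk n n)) (\<Prod>d\<in>legendre_roots n. [:-d,1:]) \<and> fk n n \<noteq> 0
   \<and> degree (fk n n) = n"
proof -
  have R: "legendre_roots n = {x. poly (fk n n) x = 0}"
    by (simp add: legendre_roots_def legendre_fk)
  have dg: "degree (fk n n) = n" "fk n n \<noteq> 0" using fk_degree[of n n] by auto
  obtain S where S: "finite S" "S \<subseteq> {-1<..<1}" "card S = n" "\<forall>x\<in>S. poly (fk n n) x = 0"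
    using fk_roots[of n n] by auto
  have fin: "finite {x. poly (fk n n) x = 0}" using poly_roots_finite dg by auto
  have "card {x. poly (fk n n) x = 0} \<le> n" using card_poly_roots_bound dg by metis
  moreover have "S \<subseteq> {x. poly (fk n n) x = 0}" using S by auto
  ultimately have eq: "S = {x. poly (fk n n) x = 0}" using S(3) fin by (metis card_seteq)
  have H: "fk n n = smult (lead_coeff (fk n n)) (\<Prod>d\<in>S. [:-d,1:])"
    using factor_full[OF dg(2) S(1) S(4)] S(3) dg(1) by argo
  have RS: "legendre_roots n = S" using R eq by simp
  show ?thesis unfolding RS using S dg H by blast
qed


definition I :: "real poly \<Rightarrow> real" where "I p = integral {-1..1} (poly p)"

lemma poly0_fun: "poly 0 = (\<lambda>x. 0::real)" by (rule ext) simp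

lemma I_add: "I (p + q) = I p + I q"
proof -
  have "poly (p+q) = (\<lambda>x. poly p x + poly q x)" by (rule ext) simp
  then show ?thesis unfolding I_def using integral_add[OF poly_integrable poly_integrable] by simp
qed

lemma I_diff: "I (p - q) = I p - I q"
proof -
  have "poly (p-q) = (\<lambda>x. poly p x - poly q x)" by (rule ext) simp
  then show ?thesis unfolding I_def using integral_diff[OF poly_integrable poly_integrable] by simp
qed

lemma I_has: "(poly p has_integral I p) {-1..1}"
  unfolding I_def using poly_integrable by (simp add: integrable_integral)

lemma I_pderiv: "I (pderiv h) = poly h 1 - poly h (-1)"
proof -
  have "(poly (pderiv h) has_integral (poly h 1 - poly h (-1))) {-1..1}"
    by (rule fundamental_theorem_of_calculus)
       (auto simp: has_real_derivative_iff_has_vector_derivative[symmetric]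
             intro: has_field_derivative_at_within poly_DERIV)
  then show ?thesis unfolding I_def by (rule integral_unique)
qed

lemma I_ibp: "I (pderiv f * g) = poly f 1 * poly g 1 - poly f (-1) * poly g (-1) - I (f * pderiv g)"
proof -
  have "I (pderiv (f * g)) = I (f * pderiv g) + I (pderiv f * g)"
    by (simp add: pderiv_mult I_add mult.commute)
  then show ?thesis using I_pderiv[of "f*g"] by simp
qed

lemma orth: "k \<le> n \<Longrightarrow> q = 0 \<or> degree q < k \<Longrightarrow> I (fk n k * q) = 0"
proof (induction k arbitrary: q)
  case 0
  then show ?case by (auto simp: I_def poly0_fun)
next
  case (Suc k)
  have v: "poly (fk n k) 1 = 0" "poly (fk n k) (-1) = 0" using fk_vanish[of k n] Suc.prems by auto
  have "pderiv q = 0 \<or> degree (pderiv q) < k"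
  proof (cases "degree q = 0")
    case True then show ?thesis by (simp add: pderiv_eq_0_iff)
  next
    case False then show ?thesis using Suc.prems by (auto simp: degree_pderiv)
  qed
  then have "I (fk n k * pderiv q) = 0" using Suc.IH Suc.prems by auto
  moreover have "fk n (Suc k) = pderiv (fk n k)" by (simp add: fk_def)
  ultimately show ?case using I_ibp[of "fk n k" q] v by simp
qed

definition Lag :: "real set \<Rightarrow> real \<Rightarrow> real poly" where
  "Lag R c = (\<Prod>d\<in>R-{c}. [:-d/(c-d), 1/(c-d):])"

lemma poly_Lag: "poly (Lag R c) y = (\<Prod>d\<in>R-{c}. (y-d)/(c-d))"
  unfolding Lag_def poly_prod
  by (rule prod.cong) (auto simp: diff_divide_distrib)

lemma degree_Lag: "finite R \<Longrightarrow> degree (Lag R c) \<le> card (R - {c})"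
proof -
  assume f: "finite R"
  have "degree (Lag R c) \<le> sum (degree \<circ> (\<lambda>d. [:-d/(c-d), 1/(c-d):])) (R-{c})"
    unfolding Lag_def using f by (intro degree_prod_sum_le) auto
  also have "\<dots> \<le> sum (\<lambda>_. 1) (R-{c})" by (intro sum_mono) auto
  finally show ?thesis by simp
qed

lemma weight_nonneg:
  assumes c: "c \<in> legendre_roots n"
  shows "0 \<le> I (Lag (legendre_roots n) c)"
proof -
  let ?R = "legendre_roots n"
  let ?L = "Lag ?R c"
  have rp: "finite ?R" "card ?R = n" "fk n n = smult (lead_coeff (fk n n)) (\<Prod>d\<in>?R. [:-d,1:])"
     "fk n n \<noteq> 0" "degree (fk n n) = n"
    using roots_props[of n] by auto
  have n1: "n \<ge> 1" using c rp(1,2) by (cases n) auto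
  define H where "H = ?L * ?L - ?L"
  have Hz: "\<forall>x\<in>?R. poly H x = 0"
  proof
    fix x assume x: "x \<in> ?R"
    show "poly H x = 0"
    proof (cases "x = c")
      case True
      then have "poly ?L x = 1" by (simp add: poly_Lag)
      then show ?thesis by (simp add: H_def)
    next
      case False
      then have "poly ?L x = 0" using x rp(1) by (auto simp: poly_Lag prod_zero_iff intro!: bexI[of _ x])
      then show ?thesis by (simp add: H_def)
    qed
  qed
  have "(\<Prod>d\<in>?R. [:-d,1:]) dvd H" by (rule prod_lin_dvd[OF rp(1) Hz])
  moreover have lc: "lead_coeff (fk n n) \<noteq> 0" using rp(4) by simp
  ultimately have "fk n n dvd H" by (subst rp(3)) (simp add: smult_dvd_iff)
  then obtain Q where Q: "H = fk n n * Q" by (rule dvdE)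
  have dL: "degree ?L \<le> n - 1" using degree_Lag[OF rp(1), of c] rp(2) c rp(1) by simp
  have dH: "degree H \<le> 2 * (n - 1)"
  proof -
    have "degree (?L * ?L) \<le> 2 * (n-1)" using dL degree_mult_le[of ?L ?L] by linarith
    moreover have "degree ?L \<le> 2 * (n-1)" using dL by linarith
    ultimately show ?thesis unfolding H_def using degree_diff_le by blast
  qed
  have "Q = 0 \<or> degree Q < n"
  proof (cases "Q = 0")
    case False
    then have "degree H = n + degree Q" using Q rp(4,5) degree_mult_eq by metis
    then show ?thesis using dH n1 by linarith
  qed simp
  then have "I H = 0" using orth[of n n Q] Q by simp
  then have "I ?L = I (?L * ?L)" unfolding H_def I_diff by simp
  also have "\<dots> \<ge> 0" unfolding I_def using poly_integrable
    by (intro integral_nonneg) auto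
  finally show ?thesis by simp
qed


lemma gl_weight_node:
  assumes ab: "a < b" and c: "c \<in> legendre_roots n"
  shows "gl_weight n a b ((a+b)/2 + (b-a)/2*c) = (b-a)/2 * I (Lag (legendre_roots n) c)"
proof -
  let ?R = "legendre_roots n"
  let ?L = "Lag ?R c"
  define r where "r = (a+b)/2 + (b-a)/2*c"
  define m where "m = 2/(b-a)"
  define c0 where "c0 = -(a+b)/(b-a)"
  have ba: "b - a > 0" using ab by simp
  have cr: "(2 * r - (a + b)) / (b - a) = c" unfolding r_def using ba by (simp add: field_simps)
  have m0: "m > 0" unfolding m_def using ba by simp
  have fe: "(\<Prod>d \<in> ?R - {c}. (2 * x - (b - a) * d - (a + b)) / (2 * r - (b - a) * d - (a + b)))
      = poly ?L (m * x + c0)" for x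
    unfolding poly_Lag
  proof (rule prod.cong)
    fix d assume d: "d \<in> ?R - {c}"
    then have cd: "c - d \<noteq> 0" by auto
    have e1: "2 * r - (b - a) * d - (a + b) = (b-a) * (c - d)" unfolding r_def by (simp add: field_simps)
    have k1: "(b-a) * m = 2" "(b-a) * c0 = -(a+b)" unfolding m_def c0_def using ba by (simp_all add: field_simps)
    have "(b-a) * ((m * x + c0) - d) = ((b-a) * m) * x + (b-a) * c0 - (b-a) * d"
      by (simp add: algebra_simps)
    then have e2: "2 * x - (b - a) * d - (a + b) = (b-a) * ((m * x + c0) - d)"
      unfolding k1 by simp
    show "(2 * x - (b - a) * d - (a + b)) / (2 * r - (b - a) * d - (a + b)) = (m * x + c0 - d) / (c - d)"
      unfolding e1 e2 using ba cd by simp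
  qed simp
  have h0: "(poly ?L has_integral I ?L) (cbox (-1) 1)" using I_has by (simp add: cbox_interval)
  have H: "((\<lambda>x. poly ?L (m *\<^sub>R x + c0)) has_integral (I ?L /\<^sub>R m ^ DIM(real)))
           (cbox ((-1 - c0) /\<^sub>R m) ((1 - c0) /\<^sub>R m))"
    by (rule has_integral_affinity'[OF h0 m0])
  have q1: "(-1 - c0) /\<^sub>R m = a" "(1 - c0) /\<^sub>R m = b"
    unfolding m_def c0_def using ba by (simp_all add: field_simps)
  have q3: "I ?L /\<^sub>R m ^ DIM(real) = (b-a)/2 * I ?L" unfolding m_def by simp
  have "((\<lambda>x. poly ?L (m *\<^sub>R x + c0)) has_integral ((b-a)/2 * I ?L)) (cbox a b)"
    using H by (simp only: q1 q3)
  then have "((\<lambda>x. poly ?L (m * x + c0)) has_integral ((b-a)/2 * I ?L)) {a..b}"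
    by (simp add: cbox_interval)
  then have "integral {a..b} (\<lambda>x. poly ?L (m * x + c0)) = (b-a)/2 * I ?L" by (rule integral_unique)
  then show ?thesis unfolding gl_weight_def r_def[symmetric] cr using ab c fe by simp
qed


lemma node_in:
  fixes a b c :: real
  assumes "a \<le> b" "-1 < c" "c < 1"
  shows "(a+b)/2 + (b-a)/2*c \<in> {a..b}"
proof -
  have p: "0 \<le> (b-a)*(1+c)" "0 \<le> (b-a)*(1-c)" using assms by simp_all
  have e1: "(a+b)/2 + (b-a)/2*c - a = (b-a)*(1+c)/2" by (simp add: field_simps)
  have e2: "b - ((a+b)/2 + (b-a)/2*c) = (b-a)*(1-c)/2" by (simp add: field_simps)
  have "a \<le> (a+b)/2 + (b-a)/2*c" using p(1) e1 by linarith
  moreover have "(a+b)/2 + (b-a)/2*c \<le> b" using p(2) e2 by linarith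
  ultimately show ?thesis by simp
qed

lemma gl_sum_repr:
  assumes ab: "a < b"
  shows "gl_sum n a b \<psi> = (\<Sum>c\<in>legendre_roots n.
            ereal ((b-a)/2 * I (Lag (legendre_roots n) c)) * \<psi> ((a+b)/2 + (b-a)/2*c))"
proof -
  let ?R = "legendre_roots n"
  define nd where "nd = (\<lambda>c. (a+b)/2 + (b-a)/2*c)"
  define g where "g = (\<lambda>r. ereal (gl_weight n a b r) * \<psi> r)"
  define A where "A = {r \<in> {a..b}. gl_weight n a b r \<noteq> 0}"
  have rp: "finite ?R" "?R \<subseteq> {-1<..<1}" using roots_props[of n] by auto
  have ba: "b - a > 0" using ab by simp
  have inj: "inj_on nd ?R" unfolding nd_def using ba by (intro inj_onI) simp
  have AB: "A \<subseteq> nd ` ?R"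
  proof
    fix r assume r: "r \<in> A"
    define c where "c = (2 * r - (a + b)) / (b - a)"
    have "c \<in> ?R" using r unfolding A_def gl_weight_def c_def by (auto split: if_splits)
    moreover have "r = nd c" unfolding nd_def c_def using ba by (simp add: field_simps)
    ultimately show "r \<in> nd ` ?R" by blast
  qed
  have z: "\<forall>r \<in> nd ` ?R - A. g r = 0"
  proof
    fix r assume r: "r \<in> nd ` ?R - A"
    then obtain c where c: "c \<in> ?R" "r = nd c" by auto
    have "-1 < c" "c < 1" using c(1) rp(2) by auto
    then have "r \<in> {a..b}" unfolding c(2) nd_def using ab node_in by simp
    then have "gl_weight n a b r = 0" using r A_def by auto
    then show "g r = 0" unfolding g_def by simp
  qed
  have "gl_sum n a b \<psi> = sum g A" unfolding gl_sum_def g_def A_def ..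
  also have "\<dots> = sum g (nd ` ?R)"
    by (rule sum.mono_neutral_left[OF finite_imageI[OF rp(1)] AB z])
  also have "\<dots> = sum (g \<circ> nd) ?R" by (rule sum.reindex[OF inj])
  also have "\<dots> = (\<Sum>c\<in>?R. ereal ((b-a)/2 * I (Lag ?R c)) * \<psi> ((a+b)/2 + (b-a)/2*c))"
    by (rule sum.cong[OF refl]) (simp only: g_def nd_def o_def gl_weight_node[OF ab])
  finally show ?thesis .
qed

theorem lemma3p1:
  fixes T s t :: real and n :: nat and \<psi> :: "real \<Rightarrow> ereal"
  assumes "0 < T" and "0 \<le> s" and "s < T" and "0 \<le> t" and "t \<le> s"
    and "\<And>r. r \<in> {0..T} \<Longrightarrow> 0 \<le> \<psi> r"
    and "\<And>x y. x \<in> {0..T} \<Longrightarrow> y \<in> {0..T} \<Longrightarrow> x \<le> y \<Longrightarrow> \<psi> y \<le> \<psi> x"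
  shows "gl_sum n s T \<psi> \<le> gl_sum n t T \<psi>"
proof (cases "t = s")
  case True
  then show ?thesis by simp
next
  case False
  then have ts: "t < s" using assms(5) by simp
  let ?R = "legendre_roots n"
  have rp: "?R \<subseteq> {-1<..<1}" using roots_props[of n] by auto
  show ?thesis
    unfolding gl_sum_repr[OF assms(3)] gl_sum_repr[of t T, OF less_trans[OF ts assms(3)]]
  proof (rule sum_mono)
    fix c assume c: "c \<in> ?R"
    have c1: "-1 < c" "c < 1" using c rp by auto
    have W: "0 \<le> I (Lag ?R c)" by (rule weight_nonneg[OF c])
    define ns where "ns = (s+T)/2 + (T-s)/2*c"
    define nt where "nt = (t+T)/2 + (T-t)/2*c"
    have ns_in: "ns \<in> {0..T}" unfolding ns_def using node_in[of s T c] c1 assms(2,3) by auto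
    have nt_in: "nt \<in> {0..T}" unfolding nt_def using node_in[of t T c] c1 assms(4) assms(3) ts by auto
    have "ns - nt = (s - t) * (1 - c) / 2" unfolding ns_def nt_def by (simp add: field_simps)
    also have "\<dots> \<ge> 0" using ts c1 by simp
    finally have le: "nt \<le> ns" by simp
    have "(T-s)/2 * I (Lag ?R c) \<le> (T-t)/2 * I (Lag ?R c)"
      using W ts by (intro mult_right_mono) auto
    moreover have "0 \<le> (T-s)/2 * I (Lag ?R c)" using W assms(3) by simp
    ultimately show "ereal ((T-s)/2 * I (Lag ?R c)) * \<psi> ((s+T)/2 + (T-s)/2*c)
        \<le> ereal ((T-t)/2 * I (Lag ?R c)) * \<psi> ((t+T)/2 + (T-t)/2*c)"
      unfolding ns_def[symmetric] nt_def[symmetric]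
      using assms(6)[OF ns_in] assms(7)[OF nt_in ns_in le]
      by (intro ereal_mult_mono') auto
  qed
qed

end
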